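(* Let $(\rho,\sigma)\in\mathfrak V$ with $\sigma\le0$ and let $C,D\in W^{(l)}\setminus\{0\}$ with $v_{\rho,\sigma}(C)>0$. If $[C^k,D]_{\rho,\sigma}=\ell_{\rho,\sigma}(C^{k+j})$ for some $k\in\mathbb{N}$ and $j\in\mathbb{N}_0$, then there exists a $(\rho,\sigma)$-homogeneous element $E\in W^{(l)}$ such that $[C^t,E]_{\rho,\sigma}=t\,\ell_{\rho,\sigma}(C^t)$ for all $t\in\mathbb{N}$.
   Context: $K$ is a field of characteristic zero, $l\in\mathbb{N}$. $W^{(l)}$ is the associative $K$-algebra with $K$-basis $\{X^{i/l}Y^j:i\in\mathbb{Z},j\in\mathbb{N}_0\}$, powers of $X$ multiplying as Laurent monomials and $[Y,X^{\alpha}]=\alpha X^{\alpha-1}$ for $\alpha\in\frac1l\mathbb{Z}$. $L^{(l)}=K[x^{1/l},x^{-1/l},y]$, $\Psi^{(l)}(X^{i/l}Y^j)=x^{i/l}y^j$ ($K$-linear); $\mathrm{Supp}(P)$ = set of exponents of $\Psi^{(l)}(P)$ with nonzero coefficient. $\mathfrak V=\{(\rho,\sigma)\in\mathbb{Z}^2:\gcd(\rho,\sigma)=1,\rho+\sigma>0\}$. For $P\ne0$: $v_{\rho,\sigma}(P)=\max\{\rho a+\sigma b:(a,b)\in\mathrm{Supp}(P)\}$; $\ell_{\rho,\sigma}(P)\in L^{(l)}$ is the sum of the terms of $\Psi^{(l)}(P)$ of $(\rho,\sigma)$-degree $v_{\rho,\sigma}(P)$. $P$ is $(\rho,\sigma)$-homogeneous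 if $P=0$ or $\Psi^{(l)}(P)=\ell_{\rho,\sigma}(P)$. $[P,Q]_{\rho,\sigma}:=0$ if $[P,Q]=0$ or $v_{\rho,\sigma}([P,Q])<v_{\rho,\sigma}(P)+v_{\rho,\sigma}(Q)-(\rho+\sigma)$, and $:=\ell_{\rho,\sigma}([P,Q])$ otherwise. *)

theory Defs
  imports Main "HOL.Rat"
begin

text \<open>Elements of W^(l) (and of L^(l)) are represented by their coefficient functions:
  P (i,j) is the coefficient of X^(i/l) Y^j (resp. x^(i/l) y^j); Psi^(l) is thus the identity
  on representations.\<close>

type_synonym 'k wl = "int \<times> nat \<Rightarrow> 'k"

definition W_supp :: "'k::zero wl \<Rightarrow> (int \<times> nat) set" where
  "W_supp P = {e. P e \<noteq> 0}"

definition W_elem :: "'k::zero wl \<Rightarrow> bool" where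
  "W_elem P \<longleftrightarrow> finite (W_supp P)"

definition W_zero :: "'k::zero wl" where
  "W_zero = (\<lambda>_. 0)"

definition W_one :: "'k::{zero,one} wl" where
  "W_one = (\<lambda>e. if e = (0, 0) then 1 else 0)"

definition W_ff :: "'k::field_char_0 \<Rightarrow> nat \<Rightarrow> 'k" where
  "W_ff b k = (\<Prod>t<k. b - of_nat t)"

text \<open>Product in W^(l): X^(a/l) Y^m * X^(b/l) Y^n
   = sum_k (m choose k) ff(b/l,k) X^((a+b-k l)/l) Y^(m+n-k), since [Y,X^alpha] = alpha X^(alpha-1).\<close>
definition W_mult :: "nat \<Rightarrow> 'k::field_char_0 wl \<Rightarrow> 'k wl \<Rightarrow> 'k wl" where
  "W_mult l P Q = (\<lambda>(a, n). \<Sum>(p, q) \<in> W_supp P \<times> W_supp Q. \<Sum>k \<in> {..snd p}.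
      if fst p + fst q - int k * int l = a \<and> snd p + snd q - k = n
      then P p * Q q * of_nat (snd p choose k) * W_ff (of_int (fst q) / of_nat l) k
      else 0)"

primrec W_pow :: "nat \<Rightarrow> 'k::field_char_0 wl \<Rightarrow> nat \<Rightarrow> 'k wl" where
  "W_pow l P 0 = W_one"
| "W_pow l P (Suc n) = W_mult l (W_pow l P n) P"

definition W_comm :: "nat \<Rightarrow> 'k::field_char_0 wl \<Rightarrow> 'k wl \<Rightarrow> 'k wl" where
  "W_comm l P Q = (\<lambda>e. W_mult l P Q e - W_mult l Q P e)"

definition W_deg :: "nat \<Rightarrow> int \<Rightarrow> int \<Rightarrow> int \<times> nat \<Rightarrow> rat" where
  "W_deg l \<rho> \<sigma> e = of_int \<rho> * (of_int (fst e) / of_nat l) + of_int \<sigma> * of_nat (snd e)"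

definition W_v :: "nat \<Rightarrow> int \<Rightarrow> int \<Rightarrow> 'k::zero wl \<Rightarrow> rat" where
  "W_v l \<rho> \<sigma> P = Max (W_deg l \<rho> \<sigma> ` W_supp P)"

definition W_ell :: "nat \<Rightarrow> int \<Rightarrow> int \<Rightarrow> 'k::zero wl \<Rightarrow> 'k wl" where
  "W_ell l \<rho> \<sigma> P = (\<lambda>e. if W_deg l \<rho> \<sigma> e = W_v l \<rho> \<sigma> P then P e else 0)"

definition W_homog :: "nat \<Rightarrow> int \<Rightarrow> int \<Rightarrow> 'k::zero wl \<Rightarrow> bool" where
  "W_homog l \<rho> \<sigma> P \<longleftrightarrow> P = W_zero \<or> P = W_ell l \<rho> \<sigma> P"

definition W_bracket :: "nat \<Rightarrow> int \<Rightarrow> int \<Rightarrow> 'k::field_char_0 wl \<Rightarrow> 'k wl \<Rightarrow> 'k wl" where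
  "W_bracket l \<rho> \<sigma> P Q =
     (if W_comm l P Q = W_zero
         \<or> W_v l \<rho> \<sigma> (W_comm l P Q) < W_v l \<rho> \<sigma> P + W_v l \<rho> \<sigma> Q - of_int (\<rho> + \<sigma>)
      then W_zero else W_ell l \<rho> \<sigma> (W_comm l P Q))"

definition frakV :: "(int \<times> int) set" where
  "frakV = {(\<rho>, \<sigma>). gcd \<rho> \<sigma> = 1 \<and> \<rho> + \<sigma> > 0}"

end

theory Submission
  imports Defs "HOL-Computational_Algebra.Polynomial_Factorial"
begin


context begin
interpretation fp: 
  normalization_euclidean_semiring_multiplicative where zero = "0 :: 'a :: field poly"
    and one = 1 and plus = plus and minus = minus
    and times = times
    and normalize = "\<lambda>p. smult (inverse (lead_coeff p)) p"
    and unit_factor = "\<lambda>p. [:lead_coeff p:]"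
    and euclidean_size = "\<lambda>p. if p = 0 then 0 else 2 ^ degree p"
    and divide = divide and modulo = modulo
  rewrites "dvd.dvd (times :: 'a poly \<Rightarrow> _) = Rings.dvd"
    and "comm_monoid_mult.prod_mset times 1 = prod_mset"
    and "comm_semiring_1.irreducible times 1 0 = irreducible"
    and "comm_semiring_1.prime_elem times 1 0 = prime_elem"
proof -
  show "dvd.dvd (times :: 'a poly \<Rightarrow> _) = Rings.dvd"
    by (simp add: dvd_dict)
  show "comm_monoid_mult.prod_mset times 1 = prod_mset"
    by (simp add: prod_mset_dict)
  show "comm_semiring_1.irreducible times 1 0 = irreducible"
    by (simp add: irreducible_dict)
  show "comm_semiring_1.prime_elem times 1 0 = prime_elem"
    by (simp add: prime_elem_dict)
  show "class.normalization_euclidean_semiring_multiplicative divide plus minus (0 :: 'a poly) times 1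
    modulo (\<lambda>p. if p = 0 then 0 else 2 ^ degree p)
    (\<lambda>p. [:lead_coeff p:]) (\<lambda>p. smult (inverse (lead_coeff p)) p)"
  proof (standard, fold dvd_dict)
    fix p :: "'a poly"
    show "[:lead_coeff p:] * smult (inverse (lead_coeff p)) p = p"
      by (cases "p = 0") simp_all
  next
    fix p :: "'a poly" assume "is_unit p"
    then show "[:lead_coeff p:] = p"
      by (elim is_unit_polyE) (auto simp: monom_0 one_poly_def field_simps)
  next
    fix p :: "'a poly" assume "p \<noteq> 0"
    then show "is_unit [:lead_coeff p:]"
      by (simp add: is_unit_pCons_iff)
  next
    fix a b :: "'a poly" assume "is_unit a"
    thus "[:lead_coeff (a * b):] = a * [:lead_coeff b:]"
      by (auto elim!: is_unit_polyE)
  qed (auto simp: lead_coeff_mult Rings.div_mult_mod_eq intro!: degree_mod_less' degree_mult_right_le)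
qed

lemma pw_eq: "power.power (1::'a::field poly) (*) x n = x ^ n"
  by (induction n) (simp_all add: power.power.simps)

lemma p_not_dvd_pderiv:
  fixes p :: "'k::field_char_0 poly"
  assumes "prime_elem p" shows "\<not> p dvd pderiv p"
proof
  assume d: "p dvd pderiv p"
  have "degree p \<noteq> 0" using assms
    by (metis is_unit_iff_degree prime_elem_def)
  hence nz: "pderiv p \<noteq> 0" by (simp add: pderiv_eq_0_iff)
  have "degree p \<le> degree (pderiv p)" using d nz by (rule dvd_imp_degree_le)
  moreover have "degree (pderiv p) < degree p"
    using \<open>degree p \<noteq> 0\<close> degree_pderiv by (metis diff_less gr0I zero_less_one)
  ultimately show False by simp
qed

lemma ident:
  fixes p R S :: "'k::field_char_0 poly" and v w :: 'k
  assumes "m \<ge> 1"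
  shows "smult w (pderiv (p^m * R) * (p^n * S)) - smult v ((p^m * R) * pderiv (p^n * S))
     = smult (w * of_nat m - v * of_nat n) (p^(m+n-1) * (pderiv p * R * S))
       + p^(m+n) * (smult w (pderiv R * S) - smult v (R * pderiv S))"
proof -
  obtain m' where m: "m = Suc m'" using assms by (cases m) auto
  show ?thesis
  proof (cases n)
    case 0
    then show ?thesis unfolding m
      by (simp add: pderiv_mult pderiv_power algebra_simps smult_add_right smult_diff_right del: power_Suc)
  next
    case (Suc n')
    then show ?thesis unfolding m
      by (simp add: pderiv_mult pderiv_power algebra_simps smult_add_right smult_diff_right power_add del: power_Suc)
         (simp add: power_add algebra_simps smult_diff_left smult_add_left)
  qed
qed


lemma div_lemma:
  fixes F G :: "'k::field_char_0 poly" and v w c :: 'k and j :: nat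
  assumes F0: "F \<noteq> 0" and G0: "G \<noteq> 0"
    and eq: "smult w (pderiv F * G) - smult v (F * pderiv G) = smult c (F^(j+1))"
    and key: "\<And>m n. 0 < m \<Longrightarrow> n < j*m \<Longrightarrow> w * of_nat m - v * of_nat n \<noteq> 0"
  shows "F^j dvd G"
proof (rule fp.multiplicity_le_imp_dvd)
  show "F^j \<noteq> 0" using F0 by simp
  fix p :: "'k poly" assume "fp.prime p"
  hence pp: "prime_elem p" by (rule fp.prime_imp_prime_elem)
  hence nu: "\<not> is_unit p" and p0: "p \<noteq> 0" by (auto simp: prime_elem_def)
  define m where "m = fp.multiplicity p F"
  define n where "n = fp.multiplicity p G"
  have mj: "fp.multiplicity p (F^j) = j * m"
    unfolding m_def using fp.prime_elem_multiplicity_power_distrib[of p F j] pp F0 by (simp add: pw_eq)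
  show "fp.multiplicity p (F^j) \<le> fp.multiplicity p G"
  proof (rule ccontr)
    assume "\<not> ?thesis"
    hence lt: "n < j*m" using mj n_def by simp
    hence m1: "m \<ge> 1" by (cases m) auto
    obtain R where FR: "F = p^m * R" and pR: "\<not> p dvd R"
      using fp.multiplicity_decompose'[OF F0 nu] m_def unfolding pw_eq by metis
    obtain S where GS: "G = p^n * S" and pS: "\<not> p dvd S"
      using fp.multiplicity_decompose'[OF G0 nu] n_def unfolding pw_eq by metis
    define \<alpha> where "\<alpha> = w * of_nat m - v * of_nat n"
    have a0: "\<alpha> \<noteq> 0" unfolding \<alpha>_def using key m1 lt by simp
    define Y where "Y = pderiv p * R * S"
    define Z where "Z = smult w (pderiv R * S) - smult v (R * pderiv S)"
    have lhs: "smult w (pderiv F * G) - smult v (F * pderiv G)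
        = smult \<alpha> (p^(m+n-1) * Y) + p^(m+n) * Z"
      unfolding FR GS \<alpha>_def Y_def Z_def by (rule ident[OF m1])
    have D1: "p^(m+n) dvd p^(m*(j+1))" using lt by (intro le_imp_power_dvd) (simp add: algebra_simps)
    have E1: "smult c (F^(j+1)) = p^(m*(j+1)) * smult c (R^(j+1))"
      unfolding FR power_mult_distrib power_mult by (simp add: mult_smult_right)
    have "p^(m+n) dvd smult c (F^(j+1))" unfolding E1 using D1 by (rule dvd_mult2)
    hence "p^(m+n) dvd smult \<alpha> (p^(m+n-1) * Y) + p^(m+n) * Z" using eq lhs by simp
    hence "p^(m+n) dvd smult \<alpha> (p^(m+n-1) * Y)"
      by (simp add: dvd_add_left_iff)
    moreover have "p^(m+n) = p^(m+n-1) * p" using m1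
      by (metis Suc_diff_1 add_gr_0 less_le_trans power_Suc2 zero_less_one)
    moreover have "smult \<alpha> (p^(m+n-1) * Y) = p^(m+n-1) * smult \<alpha> Y" by (simp add: mult_smult_right)
    ultimately have H: "p^(m+n-1) * p dvd p^(m+n-1) * smult \<alpha> Y" by metis
    have "p dvd smult \<alpha> Y" using H p0 dvd_mult_cancel_left[of "p^(m+n-1)" p "smult \<alpha> Y"] by simp
    hence "p dvd Y" using a0 by (simp add: dvd_smult_cancel)
    thus False unfolding Y_def using pp pR pS p_not_dvd_pderiv[OF pp]
      by (simp add: prime_elem_dvd_mult_iff)
  qed
qed
end


locale WL =
  fixes l :: nat and \<rho> \<sigma> :: int
  assumes l1: "l \<ge> 1" and rp: "\<rho> > 0" and sp: "\<rho> + \<sigma> > 0"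
begin

abbreviation deg where "deg \<equiv> W_deg l \<rho> \<sigma>"
abbreviation vv where "vv \<equiv> W_v l \<rho> \<sigma>"
abbreviation sr :: rat where "sr \<equiv> of_int (\<rho> + \<sigma>)"

definition toP :: "rat \<Rightarrow> 'k::field_char_0 wl \<Rightarrow> 'k poly" where
  "toP d P = (\<Sum>e \<in> {e \<in> W_supp P. deg e = d}. monom (P e) (snd e))"

definition emb :: "rat \<Rightarrow> 'k::field_char_0 poly \<Rightarrow> 'k wl" where
  "emb d H = (\<lambda>e. if deg e = d then coeff H (snd e) else 0)"

definition valid :: "rat \<Rightarrow> 'k::field_char_0 poly \<Rightarrow> bool" where
  "valid d H \<longleftrightarrow> (\<forall>b. coeff H b \<noteq> 0 \<longrightarrow> (\<exists>a. deg (a,b) = d))"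

lemma deg_eq: "deg (a,b) = of_int \<rho> * (of_int a / of_nat l) + of_int \<sigma> * of_nat b"
  by (simp add: W_deg_def)

lemma deg_inj: "deg (a,b) = deg (a',b) \<Longrightarrow> a = a'"
proof -
  assume "deg (a,b) = deg (a',b)"
  hence "of_int \<rho> * (of_int a / of_nat l) = (of_int \<rho> * (of_int a' / of_nat l) :: rat)"
    by (simp add: W_deg_def)
  hence "of_int a / of_nat l = (of_int a' / of_nat l :: rat)" using rp by simp
  hence "(of_int a :: rat) = of_int a'" using l1 by (simp add: divide_cancel_right)
  thus "a = a'" by simp
qed

lemma deg_inj': "deg e = deg e' \<Longrightarrow> snd e = snd e' \<Longrightarrow> e = e'"
  using deg_inj[of "fst e" "snd e" "fst e'"] by (cases e, cases e') auto

lemma deg_shift: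
  assumes "k \<le> snd p"
  shows "deg (fst p + fst q - int k * int l, snd p + snd q - k) = deg p + deg q - of_nat k * sr"
proof -
  have e1: "of_nat (snd p + snd q - k) = (of_nat (snd p) + of_nat (snd q) - of_nat k :: rat)"
    using assms by (simp add: of_nat_diff)
  have e2: "(of_int (fst p + fst q - int k * int l) / of_nat l :: rat)
      = of_int (fst p) / of_nat l + of_int (fst q) / of_nat l - of_nat k"
    using l1 by (simp add: add_divide_distrib diff_divide_distrib)
  show ?thesis unfolding W_deg_def fst_conv snd_conv e1 e2 by (simp add: algebra_simps)
qed

lemma deg_add: "deg (fst p + fst q, snd p + snd q) = deg p + deg q"
  using deg_shift[of 0 p q] by simp

lemma sr_pos: "sr > 0" using sp by simp

lemma deg_le_v: "W_elem P \<Longrightarrow> P e \<noteq> 0 \<Longrightarrow> deg e \<le> vv P"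
  unfolding W_v_def W_elem_def by (intro Max_ge) (auto simp: W_supp_def)

lemma v_attained:
  assumes "W_elem P" "P \<noteq> W_zero"
  shows "\<exists>e. P e \<noteq> 0 \<and> deg e = vv P"
proof -
  have ne: "W_supp P \<noteq> {}" using assms(2) by (auto simp: W_supp_def W_zero_def)
  have "vv P \<in> deg ` W_supp P" unfolding W_v_def
    using assms(1) ne by (intro Max_in) (auto simp: W_elem_def)
  then obtain e where "e \<in> W_supp P" "vv P = deg e" by blast
  hence "P e \<noteq> 0 \<and> deg e = vv P" by (simp add: W_supp_def)
  thus ?thesis by blast
qed

lemma coeff_toP_sum:
  "coeff (toP d P) b = (\<Sum>e \<in> {e \<in> W_supp P. deg e = d}. if snd e = b then P e else 0)"
  unfolding toP_def by (simp add: coeff_sum coeff_monom)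

lemma coeff_toP:
  assumes "W_elem P" "deg (a,b) = d"
  shows "coeff (toP d P) b = P (a,b)"
proof -
  have fin: "finite {e \<in> W_supp P. deg e = d}" using assms(1) by (auto simp: W_elem_def)
  have "coeff (toP d P) b = (\<Sum>e \<in> {e \<in> W_supp P. deg e = d}. if e = (a,b) then P e else 0)"
    unfolding coeff_toP_sum
  proof (intro sum.cong refl)
    fix e assume "e \<in> {e \<in> W_supp P. deg e = d}"
    hence "deg e = deg (a,b)" using assms(2) by simp
    hence "snd e = b \<longleftrightarrow> e = (a,b)" using deg_inj'[of e "(a,b)"] by auto
    thus "(if snd e = b then P e else 0) = (if e = (a,b) then P e else 0)" by simp
  qed
  also have "\<dots> = (if (a,b) \<in> {e \<in> W_supp P. deg e = d} then P (a,b) else 0)"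
    using fin by (simp add: sum.delta)
  also have "\<dots> = P (a,b)" using assms(2) by (auto simp: W_supp_def)
  finally show ?thesis .
qed

lemma toP_valid:
  assumes "W_elem P"
  shows "valid d (toP d P)"
  unfolding valid_def
proof (intro allI impI)
  fix b assume "coeff (toP d P) b \<noteq> 0"
  hence "(\<Sum>e \<in> {e \<in> W_supp P. deg e = d}. if snd e = b then P e else 0) \<noteq> 0"
    unfolding coeff_toP_sum .
  then obtain e where "e \<in> {e \<in> W_supp P. deg e = d}" "(if snd e = b then P e else 0) \<noteq> 0"
    by (rule sum.not_neutral_contains_not_neutral)
  hence "snd e = b" "deg e = d" by (auto split: if_splits)
  hence "deg (fst e, b) = d" by (metis prod.collapse)
  thus "\<exists>a. deg (a,b) = d" by blast
qed

lemma toP_nonzero: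
  assumes "W_elem P" "P \<noteq> W_zero"
  shows "toP (vv P) P \<noteq> 0"
proof -
  obtain e where e: "P e \<noteq> 0" "deg e = vv P" using v_attained[OF assms] by blast
  have "coeff (toP (vv P) P) (snd e) = P (fst e, snd e)"
    using e(2) by (intro coeff_toP[OF assms(1)]) simp
  thus ?thesis using e(1) by auto
qed

lemma emb_elem: "W_elem (emb d H)"
proof -
  let ?A = "{e. deg e = d \<and> snd e \<le> degree H}"
  have "inj_on snd ?A" by (rule inj_onI) (rule deg_inj', auto)
  moreover have "snd ` ?A \<subseteq> {..degree H}" by auto
  ultimately have "finite ?A" by (meson finite_atMost finite_imageD finite_subset)
  moreover have "W_supp (emb d H) \<subseteq> ?A"
    by (auto simp: W_supp_def emb_def split: if_splits intro: le_degree)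
  ultimately show ?thesis unfolding W_elem_def by (rule finite_subset[rotated])
qed

lemma toP_emb:
  assumes "valid d H"
  shows "toP d (emb d H) = H"
proof (rule poly_eqI)
  fix b
  show "coeff (toP d (emb d H)) b = coeff H b"
  proof (cases "\<exists>a. deg (a,b) = d")
    case True
    then obtain a where a: "deg (a,b) = d" by blast
    show ?thesis using coeff_toP[OF emb_elem[of d H] a] a by (simp add: emb_def)
  next
    case False
    hence "coeff H b = 0" using assms unfolding valid_def by blast
    moreover have "coeff (toP d (emb d H)) b = 0"
      using False toP_valid[OF emb_elem, of d d H] unfolding valid_def by blast
    ultimately show ?thesis by simp
  qed
qed

lemma emb_nonzero_ex:
  assumes "valid d H" "H \<noteq> 0"
  shows "\<exists>e. deg e = d \<and> emb d H e \<noteq> 0"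
proof -
  have "coeff H (degree H) \<noteq> 0" using assms(2) by simp
  then obtain a where a: "deg (a, degree H) = d" using assms(1) unfolding valid_def by blast
  hence "emb d H (a, degree H) \<noteq> 0" using \<open>coeff H (degree H) \<noteq> 0\<close> by (simp add: emb_def)
  thus ?thesis using a by blast
qed

lemma gen:
  assumes R: "W_elem R" and vH: "valid d H" and H0: "H \<noteq> 0"
    and eq: "\<And>e. deg e \<ge> d \<Longrightarrow> R e = (if deg e = d then coeff H (snd e) else 0)"
  shows "R \<noteq> W_zero" "vv R = d" "toP d R = H"
proof -
  obtain e0 where e0: "deg e0 = d" "emb d H e0 \<noteq> 0" using emb_nonzero_ex[OF vH H0] by blast
  hence Re0: "R e0 \<noteq> 0" using eq[of e0] by (simp add: emb_def)
  thus R0: "R \<noteq> W_zero" by (auto simp: W_zero_def)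
  have ge: "vv R \<ge> d" using deg_le_v[OF R Re0] e0 by simp
  obtain e1 where e1: "R e1 \<noteq> 0" "deg e1 = vv R" using v_attained[OF R R0] by blast
  show v: "vv R = d"
  proof (rule ccontr)
    assume "vv R \<noteq> d"
    hence "deg e1 > d" using ge e1 by simp
    hence "R e1 = 0" using eq[of e1] by simp
    thus False using e1 by simp
  qed
  show "toP d R = H"
  proof (rule poly_eqI)
    fix b
    show "coeff (toP d R) b = coeff H b"
    proof (cases "\<exists>a. deg (a,b) = d")
      case True
      then obtain a where a: "deg (a,b) = d" by blast
      show ?thesis using coeff_toP[OF R a] a eq[of "(a,b)"] by simp
    next
      case False
      hence "coeff H b = 0" using vH unfolding valid_def by blast
      moreover have "coeff (toP d R) b = 0"
        using False toP_valid[OF R, of d] unfolding valid_def by blast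
      ultimately show ?thesis by simp
    qed
  qed
qed

lemma ell_eq_emb:
  assumes "W_elem P"
  shows "W_ell l \<rho> \<sigma> P = emb (vv P) (toP (vv P) P)"
proof
  fix e
  show "W_ell l \<rho> \<sigma> P e = emb (vv P) (toP (vv P) P) e"
  proof (cases "deg e = vv P")
    case True
    hence "coeff (toP (vv P) P) (snd e) = P (fst e, snd e)"
      by (intro coeff_toP[OF assms]) simp
    thus ?thesis using True by (simp add: W_ell_def emb_def)
  qed (simp add: W_ell_def emb_def)
qed

definition TT :: "'k::field_char_0 wl \<Rightarrow> 'k wl \<Rightarrow> int \<times> nat \<Rightarrow> int \<times> nat \<Rightarrow> int \<times> nat \<Rightarrow> nat \<Rightarrow> 'k" where
  "TT P Q e p q k = (if fst p + fst q - int k * int l = fst e \<and> snd p + snd q - k = snd e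
      then P p * Q q * of_nat (snd p choose k) * W_ff (of_int (fst q) / of_nat l) k else 0)"

lemma W_mult_eq:
  "W_mult l P Q e = (\<Sum>p\<in>W_supp P. \<Sum>q\<in>W_supp Q. \<Sum>k\<in>{..snd p}. TT P Q e p q k)"
proof -
  have "W_mult l P Q e = (\<Sum>(p,q)\<in>W_supp P \<times> W_supp Q. \<Sum>k\<in>{..snd p}. TT P Q e p q k)"
    by (cases e) (simp add: W_mult_def TT_def)
  also have "\<dots> = (\<Sum>p\<in>W_supp P. \<Sum>q\<in>W_supp Q. \<Sum>k\<in>{..snd p}. TT P Q e p q k)"
    by (rule sum.cartesian_product[symmetric])
  finally show ?thesis .
qed

lemma TT_deg:
  assumes "TT P Q e p q k \<noteq> 0" "k \<le> snd p"
  shows "deg e = deg p + deg q - of_nat k * sr"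
proof -
  have "e = (fst p + fst q - int k * int l, snd p + snd q - k)"
    using assms(1) unfolding TT_def by (cases e) (auto split: if_splits)
  thus ?thesis using deg_shift[OF assms(2), of q] by simp
qed

lemma TT0: "TT P Q e p q 0 = (if fst p + fst q = fst e \<and> snd p + snd q = snd e then P p * Q q else 0)"
  by (simp add: TT_def W_ff_def)

lemma supp_le: "W_elem P \<Longrightarrow> p \<in> W_supp P \<Longrightarrow> deg p \<le> vv P"
  by (rule deg_le_v) (auto simp: W_supp_def)

lemma coeff_toP_mult:
  "coeff (toP d1 P * toP d2 Q) b = (\<Sum>p\<in>{e \<in> W_supp P. deg e = d1}. \<Sum>q\<in>{e \<in> W_supp Q. deg e = d2}.
      if snd p + snd q = b then P p * Q q else 0)"
  unfolding toP_def sum_product mult_monom by (simp add: coeff_sum coeff_monom)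

lemma mult_top:
  assumes P: "W_elem P" and Q: "W_elem Q" and ge: "deg e \<ge> vv P + vv Q"
  shows "W_mult l P Q e = (if deg e = vv P + vv Q then coeff (toP (vv P) P * toP (vv Q) Q) (snd e) else 0)"
proof -
  let ?c0 = "\<lambda>p q. fst p + fst q = fst e \<and> snd p + snd q = snd e"
  have inner: "(\<Sum>k\<in>{..snd p}. TT P Q e p q k) = (if ?c0 p q then P p * Q q else 0)"
    if p: "p \<in> W_supp P" and q: "q \<in> W_supp Q" for p q
  proof -
    have z: "TT P Q e p q k = 0" if k: "k \<in> {..snd p} - {0}" for k
    proof (rule ccontr)
      assume nz: "TT P Q e p q k \<noteq> 0"
      have "deg e = deg p + deg q - of_nat k * sr" using TT_deg[OF nz] k by simp
      moreover have "of_nat k * sr > 0" using k sr_pos by simp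
      moreover have "deg p \<le> vv P" "deg q \<le> vv Q" using supp_le[OF P p] supp_le[OF Q q] by auto
      ultimately show False using ge by linarith
    qed
    have "(\<Sum>k\<in>{..snd p}. TT P Q e p q k) = TT P Q e p q 0 + (\<Sum>k\<in>{..snd p} - {0}. TT P Q e p q k)"
      by (rule sum.remove) auto
    also have "(\<Sum>k\<in>{..snd p} - {0}. TT P Q e p q k) = 0" using z by (intro sum.neutral) blast
    finally show ?thesis by (simp add: TT0)
  qed
  have c0deg: "deg e = deg p + deg q" if "?c0 p q" for p q
  proof -
    have "e = (fst p + fst q, snd p + snd q)" using that by (cases e) auto
    thus ?thesis using deg_add[of p q] by simp
  qed
  have "W_mult l P Q e = (\<Sum>p\<in>W_supp P. \<Sum>q\<in>W_supp Q. if ?c0 p q then P p * Q q else 0)"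
    unfolding W_mult_eq using inner by (intro sum.cong refl) auto
  also have "\<dots> = (if deg e = vv P + vv Q then coeff (toP (vv P) P * toP (vv Q) Q) (snd e) else 0)"
  proof (cases "deg e = vv P + vv Q")
    case False
    hence gt: "deg e > vv P + vv Q" using ge by simp
    have "(if ?c0 p q then P p * Q q else 0) = 0" if "p \<in> W_supp P" "q \<in> W_supp Q" for p q
    proof -
      have "deg p \<le> vv P" "deg q \<le> vv Q" using supp_le[OF P that(1)] supp_le[OF Q that(2)] by auto
      hence "\<not> ?c0 p q" using c0deg gt by fastforce
      thus ?thesis by (rule if_not_P)
    qed
    thus ?thesis using False by (simp add: sum.neutral)
  next
    case True
    let ?S1 = "{e \<in> W_supp P. deg e = vv P}" and ?S2 = "{e \<in> W_supp Q. deg e = vv Q}"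
    have fP: "finite (W_supp P)" and fQ: "finite (W_supp Q)" using P Q by (auto simp: W_elem_def)
    have top: "deg p = vv P \<and> deg q = vv Q" if "p \<in> W_supp P" "q \<in> W_supp Q" "?c0 p q" for p q
    proof -
      have "deg p \<le> vv P" "deg q \<le> vv Q" using supp_le[OF P that(1)] supp_le[OF Q that(2)] by auto
      thus ?thesis using c0deg[OF that(3)] True by linarith
    qed
    have "(\<Sum>p\<in>W_supp P. \<Sum>q\<in>W_supp Q. if ?c0 p q then P p * Q q else 0)
        = (\<Sum>p\<in>?S1. \<Sum>q\<in>W_supp Q. if ?c0 p q then P p * Q q else 0)"
    proof (rule sum.mono_neutral_right[OF fP])
      show "?S1 \<subseteq> W_supp P" by auto
      show "\<forall>p\<in>W_supp P - ?S1. (\<Sum>q\<in>W_supp Q. if ?c0 p q then P p * Q q else 0) = 0"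
      proof
        fix p assume p: "p \<in> W_supp P - ?S1"
        show "(\<Sum>q\<in>W_supp Q. if ?c0 p q then P p * Q q else 0) = 0"
        proof (rule sum.neutral, rule ballI)
          fix q assume q: "q \<in> W_supp Q"
          show "(if ?c0 p q then P p * Q q else 0) = 0" using top[of p q] p q by auto
        qed
      qed
    qed
    also have "\<dots> = (\<Sum>p\<in>?S1. \<Sum>q\<in>?S2. if ?c0 p q then P p * Q q else 0)"
    proof (rule sum.cong[OF refl], rule sum.mono_neutral_right[OF fQ])
      fix p assume p: "p \<in> ?S1"
      show "?S2 \<subseteq> W_supp Q" by auto
      show "\<forall>q\<in>W_supp Q - ?S2. (if ?c0 p q then P p * Q q else 0) = 0"
      proof
        fix q assume q: "q \<in> W_supp Q - ?S2"
        show "(if ?c0 p q then P p * Q q else 0) = 0" using top[of p q] p q by auto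
      qed
    qed
    also have "\<dots> = (\<Sum>p\<in>?S1. \<Sum>q\<in>?S2. if snd p + snd q = snd e then P p * Q q else 0)"
    proof (intro sum.cong refl)
      fix p q assume pq: "p \<in> ?S1" "q \<in> ?S2"
      have "?c0 p q \<longleftrightarrow> snd p + snd q = snd e"
      proof
        assume h: "snd p + snd q = snd e"
        have "deg (fst p + fst q, snd e) = deg (fst e, snd e)"
          using deg_add[of p q] h pq True by simp
        hence "fst p + fst q = fst e" by (rule deg_inj)
        thus "?c0 p q" using h by simp
      qed simp
      thus "(if ?c0 p q then P p * Q q else 0) = (if snd p + snd q = snd e then P p * Q q else 0)"
        by simp
    qed
    finally show ?thesis using True by (simp add: coeff_toP_mult)
  qed
  finally show ?thesis .
qed

definition T1 :: "'k::field_char_0 wl \<Rightarrow> 'k wl \<Rightarrow> int \<times> nat \<Rightarrow> int \<times> nat \<Rightarrow> int \<times> nat \<Rightarrow> 'k" where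
  "T1 P Q e p q = (if fst p + fst q - int l = fst e \<and> snd p + snd q - 1 = snd e
      then P p * Q q * of_nat (snd p) * (of_int (fst q) / of_nat l) else 0)"

lemma deg_shift1:
  assumes "snd p + snd q \<ge> 1"
  shows "deg (fst p + fst q - int l, snd p + snd q - 1) = deg p + deg q - sr"
proof (cases "snd p \<ge> 1")
  case True
  thus ?thesis using deg_shift[of 1 p q] by simp
next
  case False
  hence "snd q \<ge> 1" using assms by simp
  thus ?thesis using deg_shift[of 1 q p] by (simp add: add.commute)
qed

lemma T1_deg:
  assumes "T1 P Q e p q \<noteq> 0"
  shows "deg e = deg p + deg q - sr"
proof -
  have m: "snd p \<ge> 1" using assms unfolding T1_def by (cases "snd p") (auto split: if_splits)
  have "e = (fst p + fst q - int l, snd p + snd q - 1)"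
    using assms(1) unfolding T1_def by (cases e) (auto split: if_splits)
  thus ?thesis using deg_shift1[of p q] m by simp
qed

lemma inner_k:
  assumes P: "W_elem P" and Q: "W_elem Q" and p: "p \<in> W_supp P" and q: "q \<in> W_supp Q"
    and ge: "deg e \<ge> vv P + vv Q - sr"
  shows "(\<Sum>k\<in>{..snd p}. TT P Q e p q k) = TT P Q e p q 0 + T1 P Q e p q"
proof (cases "snd p = 0")
  case True
  thus ?thesis by (simp add: T1_def)
next
  case False
  have z: "TT P Q e p q k = 0" if k: "k \<in> {..snd p} - {0} - {1}" for k
  proof (rule ccontr)
    assume nz: "TT P Q e p q k \<noteq> 0"
    have "deg e = deg p + deg q - of_nat k * sr" using TT_deg[OF nz] k by simp
    moreover have "of_nat k * sr > sr" using mult_strict_right_mono[of 1 "of_nat k" sr] k sr_pos by auto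
    moreover have "deg p \<le> vv P" "deg q \<le> vv Q" using supp_le[OF P p] supp_le[OF Q q] by auto
    ultimately show False using ge by linarith
  qed
  have "(\<Sum>k\<in>{..snd p}. TT P Q e p q k) = TT P Q e p q 0 + (\<Sum>k\<in>{..snd p} - {0}. TT P Q e p q k)"
    by (rule sum.remove) auto
  also have "(\<Sum>k\<in>{..snd p} - {0}. TT P Q e p q k) = TT P Q e p q 1 + (\<Sum>k\<in>{..snd p} - {0} - {1}. TT P Q e p q k)"
    using False by (intro sum.remove) auto
  also have "(\<Sum>k\<in>{..snd p} - {0} - {1}. TT P Q e p q k) = 0" using z by (intro sum.neutral) blast
  also have "TT P Q e p q 1 = T1 P Q e p q" by (simp add: TT_def T1_def W_ff_def)
  finally show ?thesis by simp
qed

lemma sum_top: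
  assumes P: "W_elem P" and Q: "W_elem Q"
    and h: "\<And>p q. p \<in> W_supp P \<Longrightarrow> q \<in> W_supp Q \<Longrightarrow> f p q \<noteq> 0 \<Longrightarrow> deg p + deg q \<ge> vv P + vv Q"
  shows "(\<Sum>p\<in>W_supp P. \<Sum>q\<in>W_supp Q. f p q)
       = (\<Sum>p\<in>{e \<in> W_supp P. deg e = vv P}. \<Sum>q\<in>{e \<in> W_supp Q. deg e = vv Q}. f p q)"
proof -
  let ?S1 = "{e \<in> W_supp P. deg e = vv P}" and ?S2 = "{e \<in> W_supp Q. deg e = vv Q}"
  have fP: "finite (W_supp P)" and fQ: "finite (W_supp Q)" using P Q by (auto simp: W_elem_def)
  have top: "deg p = vv P \<and> deg q = vv Q" if "p \<in> W_supp P" "q \<in> W_supp Q" "f p q \<noteq> 0" for p q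
  proof -
    have "deg p \<le> vv P" "deg q \<le> vv Q" using supp_le[OF P that(1)] supp_le[OF Q that(2)] by auto
    thus ?thesis using h[OF that] by linarith
  qed
  have "(\<Sum>p\<in>W_supp P. \<Sum>q\<in>W_supp Q. f p q) = (\<Sum>p\<in>?S1. \<Sum>q\<in>W_supp Q. f p q)"
  proof (rule sum.mono_neutral_right[OF fP])
    show "?S1 \<subseteq> W_supp P" by auto
    show "\<forall>p\<in>W_supp P - ?S1. (\<Sum>q\<in>W_supp Q. f p q) = 0"
    proof
      fix p assume p: "p \<in> W_supp P - ?S1"
      show "(\<Sum>q\<in>W_supp Q. f p q) = 0"
      proof (rule sum.neutral, rule ballI)
        fix q assume q: "q \<in> W_supp Q"
        show "f p q = 0" using top[of p q] p q by auto
      qed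
    qed
  qed
  also have "\<dots> = (\<Sum>p\<in>?S1. \<Sum>q\<in>?S2. f p q)"
  proof (rule sum.cong[OF refl], rule sum.mono_neutral_right[OF fQ])
    fix p assume p: "p \<in> ?S1"
    show "?S2 \<subseteq> W_supp Q" by auto
    show "\<forall>q\<in>W_supp Q - ?S2. f p q = 0"
    proof
      fix q assume q: "q \<in> W_supp Q - ?S2"
      show "f p q = 0" using top[of p q] p q by auto
    qed
  qed
  finally show ?thesis .
qed

definition Bk :: "rat \<Rightarrow> rat \<Rightarrow> 'k::field_char_0 poly \<Rightarrow> 'k poly \<Rightarrow> 'k poly" where
  "Bk d1 d2 F G = smult (inverse (of_int \<rho>)) (smult (of_rat d2) (pderiv F * G) - smult (of_rat d1) (F * pderiv G))"

lemma pderiv_sum: "pderiv (sum f A) = (\<Sum>x\<in>A. pderiv (f x))"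
  using higher_pderiv_sum[of 1 f A] by simp

lemma pderiv_toP: "pderiv (toP d P) = (\<Sum>p\<in>{e \<in> W_supp P. deg e = d}. monom (of_nat (snd p) * P p) (snd p - 1))"
  unfolding toP_def pderiv_sum pderiv_monom ..

lemma coeff_Bk:
  "coeff (Bk d1 d2 (toP d1 P) (toP d2 Q)) b =
    (\<Sum>p\<in>{e \<in> W_supp P. deg e = d1}. \<Sum>q\<in>{e \<in> W_supp Q. deg e = d2}.
      inverse (of_int \<rho>) * (of_rat d2 * (if snd p - 1 + snd q = b then of_nat (snd p) * P p * Q q else 0)
        - of_rat d1 * (if snd p + (snd q - 1) = b then P p * (of_nat (snd q) * Q q) else 0)))"
proof -
  have A: "coeff (pderiv (toP d1 P) * toP d2 Q) b = (\<Sum>p\<in>{e \<in> W_supp P. deg e = d1}. \<Sum>q\<in>{e \<in> W_supp Q. deg e = d2}.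
      (if snd p - 1 + snd q = b then of_nat (snd p) * P p * Q q else 0))"
    unfolding pderiv_toP unfolding toP_def sum_product mult_monom by (simp add: coeff_sum coeff_monom)
  have B: "coeff (toP d1 P * pderiv (toP d2 Q)) b = (\<Sum>p\<in>{e \<in> W_supp P. deg e = d1}. \<Sum>q\<in>{e \<in> W_supp Q. deg e = d2}.
      (if snd p + (snd q - 1) = b then P p * (of_nat (snd q) * Q q) else 0))"
    unfolding pderiv_toP unfolding toP_def sum_product mult_monom by (simp add: coeff_sum coeff_monom)
  show ?thesis unfolding Bk_def coeff_smult coeff_diff A B
    by (simp add: sum_distrib_left sum_subtractf right_diff_distrib)
qed

lemma rho_ne: "(of_int \<rho> :: 'k::field_char_0) \<noteq> 0" using rp by simp

lemma degK:
  assumes "deg p = d"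
  shows "(of_int (fst p) / of_nat l :: 'k::field_char_0) = inverse (of_int \<rho>) * (of_rat d - of_int \<sigma> * of_nat (snd p))"
proof -
  have "(of_rat (deg p) :: 'k) = of_rat d" using assms by simp
  hence "of_int \<rho> * (of_int (fst p) / of_nat l) + of_int \<sigma> * of_nat (snd p) = (of_rat d :: 'k)"
    by (simp add: W_deg_def of_rat_add of_rat_mult of_rat_divide)
  hence "of_int \<rho> * (of_int (fst p) / of_nat l) = (of_rat d - of_int \<sigma> * of_nat (snd p) :: 'k)"
    by (simp add: algebra_simps)
  thus ?thesis using rho_ne[where 'k='k] by (simp add: field_simps)
qed

lemma term_eq:
  fixes P Q :: "'k::field_char_0 wl"
  assumes dp: "deg p = vP" and dq: "deg q = vQ" and de: "deg e = vP + vQ - sr"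
  shows "T1 P Q e p q - T1 Q P e q p = inverse (of_int \<rho>) * (of_rat vQ * (if snd p - 1 + snd q = snd e then of_nat (snd p) * P p * Q q else 0)
        - of_rat vP * (if snd p + (snd q - 1) = snd e then P p * (of_nat (snd q) * Q q) else 0))"
proof (cases "snd p + snd q \<ge> 1")
  case False
  hence "snd p = 0" "snd q = 0" by auto
  thus ?thesis by (simp add: T1_def)
next
  case True
  define c where "c = (snd p + snd q - 1 = snd e)"
  have C1: "(fst p + fst q - int l = fst e \<and> snd p + snd q - 1 = snd e) \<longleftrightarrow> c"
  proof
    assume h: c
    have "deg (fst p + fst q - int l, snd e) = deg (fst e, snd e)"
      using deg_shift1[OF True] h dp dq de unfolding c_def by simp
    hence "fst p + fst q - int l = fst e" by (rule deg_inj)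
    thus "fst p + fst q - int l = fst e \<and> snd p + snd q - 1 = snd e" using h c_def by simp
  qed (simp add: c_def)
  have C2: "(fst q + fst p - int l = fst e \<and> snd q + snd p - 1 = snd e) \<longleftrightarrow> c"
    using C1 by (simp add: add.commute)
  have L1: "(if snd p - 1 + snd q = snd e then of_nat (snd p) * P p * Q q else 0) = (if c then of_nat (snd p) * P p * Q q else (0::'k))"
    unfolding c_def by (cases "snd p") auto
  have L2: "(if snd p + (snd q - 1) = snd e then P p * (of_nat (snd q) * Q q) else 0) = (if c then P p * (of_nat (snd q) * Q q) else (0::'k))"
    unfolding c_def by (cases "snd q") auto
  have Xq: "(of_int (fst q) / of_nat l :: 'k) = inverse (of_int \<rho>) * (of_rat vQ - of_int \<sigma> * of_nat (snd q))"
    by (rule degK[OF dq])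
  have Xp: "(of_int (fst p) / of_nat l :: 'k) = inverse (of_int \<rho>) * (of_rat vP - of_int \<sigma> * of_nat (snd p))"
    by (rule degK[OF dp])
  show ?thesis
    unfolding T1_def C1 C2 L1 L2
    by (cases c) (simp_all add: Xq Xp algebra_simps)
qed

lemma comm_top:
  assumes P: "W_elem P" and Q: "W_elem Q" and ge: "deg e \<ge> vv P + vv Q - sr"
  shows "W_comm l P Q e = (if deg e = vv P + vv Q - sr
           then coeff (Bk (vv P) (vv Q) (toP (vv P) P) (toP (vv Q) Q)) (snd e) else 0)"
proof -
  have ge': "deg e \<ge> vv Q + vv P - sr" using ge by simp
  have m1: "W_mult l P Q e = (\<Sum>p\<in>W_supp P. \<Sum>q\<in>W_supp Q. TT P Q e p q 0 + T1 P Q e p q)"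
    unfolding W_mult_eq
  proof (intro sum.cong refl)
    fix p q assume "p \<in> W_supp P" "q \<in> W_supp Q"
    thus "(\<Sum>k\<in>{..snd p}. TT P Q e p q k) = TT P Q e p q 0 + T1 P Q e p q"
      by (rule inner_k[OF P Q _ _ ge])
  qed
  have "W_mult l Q P e = (\<Sum>q\<in>W_supp Q. \<Sum>p\<in>W_supp P. TT Q P e q p 0 + T1 Q P e q p)"
    unfolding W_mult_eq
  proof (intro sum.cong refl)
    fix p q assume "q \<in> W_supp Q" "p \<in> W_supp P"
    thus "(\<Sum>k\<in>{..snd q}. TT Q P e q p k) = TT Q P e q p 0 + T1 Q P e q p"
      by (rule inner_k[OF Q P _ _ ge'])
  qed
  also have "\<dots> = (\<Sum>p\<in>W_supp P. \<Sum>q\<in>W_supp Q. TT Q P e q p 0 + T1 Q P e q p)"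
    by (rule sum.swap)
  also have "\<dots> = (\<Sum>p\<in>W_supp P. \<Sum>q\<in>W_supp Q. TT P Q e p q 0 + T1 Q P e q p)"
    by (intro sum.cong refl) (simp add: TT0 add.commute mult.commute)
  finally have m2: "W_mult l Q P e = \<dots>" .
  define D where "D p q = T1 P Q e p q - T1 Q P e q p" for p q
  have comm: "W_comm l P Q e = (\<Sum>p\<in>W_supp P. \<Sum>q\<in>W_supp Q. D p q)"
    unfolding W_comm_def m1 m2 D_def by (simp add: sum_subtractf[symmetric])
  have Dnz: "deg e = deg p + deg q - sr" if "D p q \<noteq> 0" for p q
  proof (cases "T1 P Q e p q = 0")
    case True
    hence nz: "T1 Q P e q p \<noteq> 0" using that by (simp add: D_def)
    show ?thesis using T1_deg[OF nz] by linarith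
  next
    case False
    thus ?thesis by (rule T1_deg)
  qed
  show ?thesis
  proof (cases "deg e = vv P + vv Q - sr")
    case False
    hence gt: "deg e > vv P + vv Q - sr" using ge by simp
    have "D p q = 0" if "p \<in> W_supp P" "q \<in> W_supp Q" for p q
    proof (rule ccontr)
      assume "D p q \<noteq> 0"
      hence "deg e = deg p + deg q - sr" by (rule Dnz)
      moreover have "deg p \<le> vv P" "deg q \<le> vv Q" using supp_le[OF P that(1)] supp_le[OF Q that(2)] by auto
      ultimately show False using gt by linarith
    qed
    thus ?thesis using False comm by (simp add: sum.neutral)
  next
    case True
    have "W_comm l P Q e = (\<Sum>p\<in>{e \<in> W_supp P. deg e = vv P}. \<Sum>q\<in>{e \<in> W_supp Q. deg e = vv Q}. D p q)"
      unfolding comm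
    proof (rule sum_top[OF P Q])
      fix p q assume "D p q \<noteq> 0"
      hence "deg e = deg p + deg q - sr" by (rule Dnz)
      thus "deg p + deg q \<ge> vv P + vv Q" using True by simp
    qed
    also have "\<dots> = coeff (Bk (vv P) (vv Q) (toP (vv P) P) (toP (vv Q) Q)) (snd e)"
      unfolding coeff_Bk D_def
      by (intro sum.cong refl term_eq) (use True in auto)
    finally show ?thesis using True by simp
  qed
qed

lemma elem_mult:
  assumes P: "W_elem P" and Q: "W_elem Q"
  shows "W_elem (W_mult l P Q)"
proof -
  let ?I = "Sigma (W_supp P \<times> W_supp Q) (\<lambda>(p,q). {..snd p})"
  let ?f = "\<lambda>((p,q),k). (fst p + fst q - int k * int l, snd p + snd q - k)"
  have fin: "finite ?I" using P Q by (intro finite_SigmaI) (auto simp: W_elem_def)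
  have "W_supp (W_mult l P Q) \<subseteq> ?f ` ?I"
  proof
    fix e assume "e \<in> W_supp (W_mult l P Q)"
    hence "W_mult l P Q e \<noteq> 0" by (simp add: W_supp_def)
    then obtain p where p: "p \<in> W_supp P" and s1: "(\<Sum>q\<in>W_supp Q. \<Sum>k\<in>{..snd p}. TT P Q e p q k) \<noteq> 0"
      unfolding W_mult_eq by (rule sum.not_neutral_contains_not_neutral)
    obtain q where q: "q \<in> W_supp Q" and s2: "(\<Sum>k\<in>{..snd p}. TT P Q e p q k) \<noteq> 0"
      using s1 by (rule sum.not_neutral_contains_not_neutral)
    obtain k where k: "k \<in> {..snd p}" and nz: "TT P Q e p q k \<noteq> 0"
      using s2 by (rule sum.not_neutral_contains_not_neutral)
    have "e = (fst p + fst q - int k * int l, snd p + snd q - k)"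
      using nz unfolding TT_def by (cases e) (auto split: if_splits)
    moreover have "((p,q),k) \<in> ?I" using p q k by auto
    ultimately show "e \<in> ?f ` ?I" by (intro image_eqI[of _ _ "((p,q),k)"]) auto
  qed
  thus ?thesis unfolding W_elem_def using fin by (meson finite_imageI finite_subset)
qed

lemma elem_comm:
  assumes P: "W_elem P" and Q: "W_elem Q"
  shows "W_elem (W_comm l P Q)"
proof -
  have "W_supp (W_comm l P Q) \<subseteq> W_supp (W_mult l P Q) \<union> W_supp (W_mult l Q P)"
    by (auto simp: W_supp_def W_comm_def)
  thus ?thesis using elem_mult[OF P Q] elem_mult[OF Q P] unfolding W_elem_def
    by (meson finite_UnI finite_subset)
qed

lemma valid_mult:
  assumes "valid d1 F" "valid d2 G"
  shows "valid (d1 + d2) (F * G)"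
  unfolding valid_def
proof (intro allI impI)
  fix b assume "coeff (F * G) b \<noteq> 0"
  hence "(\<Sum>i\<le>b. coeff F i * coeff G (b - i)) \<noteq> 0" by (simp add: coeff_mult)
  then obtain i where i: "i \<in> {..b}" and nz: "coeff F i * coeff G (b - i) \<noteq> 0"
    by (rule sum.not_neutral_contains_not_neutral)
  obtain a1 where a1: "deg (a1, i) = d1" using assms(1) nz unfolding valid_def by auto
  obtain a2 where a2: "deg (a2, b - i) = d2" using assms(2) nz unfolding valid_def by auto
  have "deg (a1 + a2, i + (b - i)) = d1 + d2" using deg_add[of "(a1,i)" "(a2, b-i)"] a1 a2 by simp
  thus "\<exists>a. deg (a, b) = d1 + d2" using i by auto
qed

lemma valid_pderiv:
  assumes "valid d F"
  shows "valid (d - sr) (pderiv F)"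
  unfolding valid_def
proof (intro allI impI)
  fix b assume "coeff (pderiv F) b \<noteq> 0"
  hence "coeff F (Suc b) \<noteq> 0" by (simp add: coeff_pderiv)
  then obtain a where a: "deg (a, Suc b) = d" using assms unfolding valid_def by blast
  have "deg (a + 0 - int l, Suc b + 0 - 1) = deg (a, Suc b) + deg (0, 0) - sr"
    using deg_shift1[of "(a, Suc b)" "(0,0)"] by simp
  hence "deg (a - int l, b) = d - sr" using a by (simp add: W_deg_def)
  thus "\<exists>a. deg (a, b) = d - sr" by blast
qed

lemma valid_smult: "valid d F \<Longrightarrow> valid d (smult c F)"
  unfolding valid_def by auto

lemma valid_diff: "valid d F \<Longrightarrow> valid d G \<Longrightarrow> valid d (F - G)"
  unfolding valid_def by (metis coeff_diff diff_zero)

lemma valid_Bk: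
  assumes "valid d1 F" "valid d2 G"
  shows "valid (d1 + d2 - sr) (Bk d1 d2 F G)"
proof -
  have 1: "valid (d1 + d2 - sr) (pderiv F * G)"
    using valid_mult[OF valid_pderiv[OF assms(1)] assms(2)] by (simp add: algebra_simps)
  have 2: "valid (d1 + d2 - sr) (F * pderiv G)"
    using valid_mult[OF assms(1) valid_pderiv[OF assms(2)]] by (simp add: algebra_simps)
  show ?thesis unfolding Bk_def
    by (intro valid_smult valid_diff 1 2)
qed

lemma one_facts:
  "W_elem (W_one :: 'k::field_char_0 wl)" "(W_one :: 'k wl) \<noteq> W_zero" "vv (W_one :: 'k wl) = 0"
    "toP 0 (W_one :: 'k wl) = 1"
proof -
  have S: "W_supp (W_one :: 'k wl) = {(0,0)}" by (auto simp: W_supp_def W_one_def)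
  show E: "W_elem (W_one :: 'k wl)" by (simp add: W_elem_def S)
  show "(W_one :: 'k wl) \<noteq> W_zero" by (auto simp: W_one_def W_zero_def fun_eq_iff)
  show "vv (W_one :: 'k wl) = 0" by (simp add: W_v_def S W_deg_def)
  have S0: "{e \<in> W_supp (W_one :: 'k wl). deg e = 0} = {(0,0)}" by (auto simp: S W_deg_def)
  show "toP 0 (W_one :: 'k wl) = 1"
    unfolding toP_def S0 by (simp add: W_one_def monom_0 pCons_one)
qed

lemma pow_facts:
  fixes C :: "'k::field_char_0 wl"
  assumes C: "W_elem C" "C \<noteq> W_zero"
  shows "W_elem (W_pow l C t) \<and> W_pow l C t \<noteq> W_zero \<and> vv (W_pow l C t) = of_nat t * vv C
     \<and> toP (vv (W_pow l C t)) (W_pow l C t) = (toP (vv C) C) ^ t"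
proof (induction t)
  case 0
  show ?case by (simp add: one_facts)
next
  case (Suc t)
  let ?P = "W_pow l C t"
  let ?H = "toP (vv ?P) ?P * toP (vv C) C"
  have P: "W_elem ?P" "?P \<noteq> W_zero" using Suc.IH by auto
  have R: "W_elem (W_mult l ?P C)" by (rule elem_mult[OF P(1) C(1)])
  have vH: "valid (vv ?P + vv C) ?H" by (intro valid_mult toP_valid P(1) C(1))
  have H0: "?H \<noteq> 0" using toP_nonzero[OF P] toP_nonzero[OF C] by simp
  have eq: "\<And>e. deg e \<ge> vv ?P + vv C \<Longrightarrow> W_mult l ?P C e = (if deg e = vv ?P + vv C then coeff ?H (snd e) else 0)"
    by (rule mult_top[OF P(1) C(1)])
  note g = gen[OF R vH H0 eq]
  have I3: "vv ?P = of_nat t * vv C" and I4: "toP (vv ?P) ?P = (toP (vv C) C) ^ t" using Suc.IH by auto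
  have "vv (W_mult l ?P C) = of_nat (Suc t) * vv C" using g(2) I3 by (simp add: algebra_simps)
  moreover have "toP (vv (W_mult l ?P C)) (W_mult l ?P C) = (toP (vv C) C) ^ Suc t"
    using g(2,3) I4 by (simp add: algebra_simps)
  ultimately show ?case using g(1) R by simp
qed

lemma bracket_top:
  assumes P: "W_elem P" "P \<noteq> W_zero" and Q: "W_elem Q" "Q \<noteq> W_zero"
  defines "B \<equiv> Bk (vv P) (vv Q) (toP (vv P) P) (toP (vv Q) Q)"
  shows "W_bracket l \<rho> \<sigma> P Q = (if B = 0 then W_zero else emb (vv P + vv Q - sr) B)"
proof -
  have R: "W_elem (W_comm l P Q)" by (rule elem_comm[OF P(1) Q(1)])
  have eq: "\<And>e. deg e \<ge> vv P + vv Q - sr \<Longrightarrow> W_comm l P Q e = (if deg e = vv P + vv Q - sr then coeff B (snd e) else 0)"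
    unfolding B_def by (rule comm_top[OF P(1) Q(1)])
  show ?thesis
  proof (cases "B = 0")
    case False
    have vB: "valid (vv P + vv Q - sr) B" unfolding B_def by (intro valid_Bk toP_valid P(1) Q(1))
    note g = gen[OF R vB False eq]
    have "W_bracket l \<rho> \<sigma> P Q = W_ell l \<rho> \<sigma> (W_comm l P Q)"
      unfolding W_bracket_def using g by simp
    also have "\<dots> = emb (vv P + vv Q - sr) B" using ell_eq_emb[OF R] g by simp
    finally show ?thesis using False by simp
  next
    case True
    show ?thesis
    proof (cases "W_comm l P Q = W_zero")
      case True
      thus ?thesis using \<open>B = 0\<close> by (simp add: W_bracket_def)
    next
      case False
      obtain e1 where e1: "W_comm l P Q e1 \<noteq> 0" "deg e1 = vv (W_comm l P Q)"
        using v_attained[OF R False] by blast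
      have "deg e1 < vv P + vv Q - sr"
      proof (rule ccontr)
        assume "\<not> ?thesis"
        hence "W_comm l P Q e1 = 0" using eq[of e1] \<open>B = 0\<close> by simp
        thus False using e1 by simp
      qed
      thus ?thesis using e1 \<open>B = 0\<close> by (simp add: W_bracket_def)
    qed
  qed
qed

end


context WL begin

lemma emb_inj:
  assumes v1: "valid d1 H1" and v2: "valid d2 H2" and H0: "H1 \<noteq> 0" and eq: "emb d1 H1 = emb d2 H2"
  shows "d1 = d2" "H1 = H2"
proof -
  obtain e where e: "deg e = d1" "emb d1 H1 e \<noteq> 0" using emb_nonzero_ex[OF v1 H0] by blast
  hence "emb d2 H2 e \<noteq> 0" using eq by simp
  hence "deg e = d2" by (simp add: emb_def split: if_splits)
  thus d: "d1 = d2" using e by simp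
  have "H1 = toP d1 (emb d1 H1)" using toP_emb[OF v1] by simp
  also have "\<dots> = toP d2 (emb d2 H2)" using eq d by simp
  also have "\<dots> = H2" using toP_emb[OF v2] by simp
  finally show "H1 = H2" .
qed

lemma emb_smult: "emb d (smult c H) e = c * emb d H e"
  by (simp add: emb_def)

lemma valid_div:
  assumes vF: "valid d1 F" and F0: "F \<noteq> 0" and vFQ: "valid (d1 + d2) (F * Q)"
  shows "valid d2 Q"
proof -
  define Q1 where "Q1 = toP d2 (emb d2 Q)"
  have cQ1: "coeff Q1 b = (if \<exists>a. deg (a,b) = d2 then coeff Q b else 0)" for b
  proof (cases "\<exists>a. deg (a,b) = d2")
    case True
    then obtain a where a: "deg (a,b) = d2" by blast
    show ?thesis using coeff_toP[OF emb_elem[of d2 Q] a] a True unfolding Q1_def by (simp add: emb_def)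
  next
    case False
    thus ?thesis using toP_valid[OF emb_elem[of d2 Q], of d2] unfolding Q1_def valid_def by auto
  qed
  have vQ1: "valid d2 Q1" unfolding Q1_def by (rule toP_valid[OF emb_elem])
  define Q2 where "Q2 = Q - Q1"
  have cQ2: "\<not> (\<exists>a. deg (a,b) = d2)" if "coeff Q2 b \<noteq> 0" for b
    using that unfolding Q2_def by (auto simp: cQ1 split: if_splits)
  have "F * Q2 = 0"
  proof (rule poly_eqI)
    fix b
    show "coeff (F * Q2) b = coeff 0 b"
    proof (cases "\<exists>a. deg (a,b) = d1 + d2")
      case True
      then obtain a where a: "deg (a,b) = d1 + d2" by blast
      have "coeff F i * coeff Q2 (b - i) = 0" if i: "i \<in> {..b}" for i
      proof (rule ccontr)
        assume nz: "coeff F i * coeff Q2 (b - i) \<noteq> 0"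
        then obtain a1 where a1: "deg (a1, i) = d1" using vF unfolding valid_def by auto
        have "deg (a1 + (a - a1), i + (b - i)) = deg (a1, i) + deg (a - a1, b - i)"
          using deg_add[of "(a1,i)" "(a - a1, b - i)"] by simp
        hence "deg (a - a1, b - i) = d2" using a a1 i by simp
        thus False using cQ2[of "b - i"] nz by auto
      qed
      hence "(\<Sum>i\<le>b. coeff F i * coeff Q2 (b - i)) = 0" by (intro sum.neutral) auto
      thus ?thesis by (simp add: coeff_mult)
    next
      case False
      have "coeff (F * Q) b = 0" using vFQ False unfolding valid_def by blast
      moreover have "coeff (F * Q1) b = 0" using valid_mult[OF vF vQ1] False unfolding valid_def by blast
      ultimately show ?thesis unfolding Q2_def by (simp add: right_diff_distrib)
    qed
  qed
  hence "Q2 = 0" using F0 by simp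
  hence "Q = Q1" unfolding Q2_def by simp
  thus ?thesis using vQ1 by simp
qed

lemma Bk_pow:
  assumes "k \<ge> 1"
  shows "Bk (of_nat k * v) w (F^k) G = smult (of_nat k) (F^(k-1) * Bk v w F G)"
proof -
  obtain k' where k: "k = Suc k'" using assms by (cases k) auto
  show ?thesis unfolding k Bk_def pderiv_power
    by (simp add: of_rat_mult of_rat_add algebra_simps smult_diff_right smult_add_left smult_add_right)
qed

lemma Bk_mulpow:
  "Bk v (of_nat j * v + s) F (F^j * Q) = F^j * Bk v s F Q"
proof (cases j)
  case 0
  thus ?thesis by simp
next
  case (Suc j')
  show ?thesis unfolding Suc Bk_def pderiv_mult pderiv_power
    by (simp add: of_rat_mult of_rat_add algebra_simps smult_diff_right smult_add_right smult_add_left)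
qed

lemma Bk_smult2: "Bk v s F (smult c Q) = smult c (Bk v s F Q)"
  unfolding Bk_def by (simp add: pderiv_smult algebra_simps smult_diff_right)

end

theorem theorem2p15:
  fixes l :: nat and \<rho> \<sigma> :: int and C D :: "'k::field_char_0 wl" and k j :: nat
  assumes "l \<ge> 1"
    and "(\<rho>, \<sigma>) \<in> frakV" and "\<sigma> \<le> 0"
    and "W_elem C" and "W_elem D" and "C \<noteq> W_zero" and "D \<noteq> W_zero"
    and "W_v l \<rho> \<sigma> C > 0"
    and "k \<ge> 1"
    and "W_bracket l \<rho> \<sigma> (W_pow l C k) D = W_ell l \<rho> \<sigma> (W_pow l C (k + j))"
  shows "\<exists>E. W_elem E \<and> W_homog l \<rho> \<sigma> E \<and>
           (\<forall>t\<ge>1. W_bracket l \<rho> \<sigma> (W_pow l C t) E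
                    = (\<lambda>e. of_nat t * W_ell l \<rho> \<sigma> (W_pow l C t) e))"
proof -
  have sp: "\<rho> + \<sigma> > 0" using assms(2) by (simp add: frakV_def)
  hence rp: "\<rho> > 0" using assms(3) by simp
  interpret WL l \<rho> \<sigma> using assms(1) rp sp by unfold_locales auto
  have C: "W_elem C" "C \<noteq> W_zero" and Dd: "W_elem D" "D \<noteq> W_zero" using assms by auto
  define v where "v = vv C"
  define F where "F = toP v C"
  have vpos: "v > 0" using assms(8) v_def by simp
  have pf: "W_elem (W_pow l C t) \<and> W_pow l C t \<noteq> W_zero \<and> vv (W_pow l C t) = of_nat t * v
       \<and> toP (of_nat t * v) (W_pow l C t) = F^t" for t
    using pow_facts[OF C, of t] unfolding v_def F_def by auto
  have F0: "F \<noteq> 0" unfolding F_def v_def by (rule toP_nonzero[OF C])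
  have vFt: "valid (of_nat t * v) (F^t)" for t
    using toP_valid[of "W_pow l C t" "of_nat t * v"] pf[of t] by simp
  have ellpow: "W_ell l \<rho> \<sigma> (W_pow l C t) = emb (of_nat t * v) (F^t)" for t
    using ell_eq_emb[of "W_pow l C t"] pf[of t] by simp
  define w where "w = vv D"
  define G where "G = toP w D"
  have G0: "G \<noteq> 0" unfolding G_def w_def by (rule toP_nonzero[OF Dd])
  have vG: "valid w G" unfolding G_def by (rule toP_valid[OF Dd(1)])
  have brk: "W_bracket l \<rho> \<sigma> (W_pow l C t) E = (if Bk (of_nat t * v) (vv E) (F^t) (toP (vv E) E) = 0 then W_zero
      else emb (of_nat t * v + vv E - sr) (Bk (of_nat t * v) (vv E) (F^t) (toP (vv E) E)))"
    if "W_elem E" "E \<noteq> W_zero" for t E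
    using bracket_top[of "W_pow l C t" E] pf[of t] that by simp
  define B0 where "B0 = Bk (of_nat k * v) w (F^k) G"
  have hyp: "(if B0 = 0 then W_zero else emb (of_nat k * v + w - sr) B0) = emb (of_nat (k+j) * v) (F^(k+j))"
    using assms(10) brk[OF Dd, of k] ellpow[of "k+j"] unfolding B0_def w_def G_def by simp
  obtain e0 where "deg e0 = of_nat (k+j) * v" "emb (of_nat (k+j) * v) (F^(k+j)) e0 \<noteq> 0"
    using emb_nonzero_ex[OF vFt[of "k+j"]] F0 by auto
  hence nzR: "emb (of_nat (k+j) * v) (F^(k+j)) \<noteq> W_zero" by (auto simp: W_zero_def)
  have B00: "B0 \<noteq> 0" using hyp nzR by auto
  have hyp2: "emb (of_nat k * v + w - sr) B0 = emb (of_nat (k+j) * v) (F^(k+j))" using hyp B00 by simp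
  have vB0: "valid (of_nat k * v + w - sr) B0" unfolding B0_def by (intro valid_Bk vFt vG)
  have dd: "of_nat k * v + w - sr = of_nat (k+j) * v" and BF: "B0 = F^(k+j)"
    using emb_inj[OF vB0 vFt B00 hyp2] by auto
  have wv: "w = of_nat j * v + sr" using dd by (simp add: algebra_simps)
  define X where "X = Bk v w F G"
  have "B0 = smult (of_nat k) (F^(k-1) * X)" unfolding B0_def X_def by (rule Bk_pow[OF assms(9)])
  moreover have "F^(k+j) = F^(k-1) * F^(j+1)"
  proof -
    have e: "k + j = (k - 1) + (j + 1)" using assms(9) by simp
    show ?thesis by (subst e) (rule power_add)
  qed
  ultimately have "F^(k-1) * smult (of_nat k) X = F^(k-1) * F^(j+1)"
    using BF by (simp add: mult_smult_right)
  note eqk = this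
  have nzk: "F^(k-1) \<noteq> 0" using F0 by simp
  have kX: "smult (of_nat k) X = F^(j+1)" using eqk by (rule iffD1[OF mult_left_cancel[OF nzk]])
  have k0: "(of_nat k :: 'k) \<noteq> 0" using assms(9) by simp
  have Yeq: "smult (of_rat w) (pderiv F * G) - smult (of_rat v) (F * pderiv G) = smult (of_int \<rho> / of_nat k) (F^(j+1))"
  proof -
    have "smult (of_nat k) (smult (inverse (of_int \<rho>)) (smult (of_rat w) (pderiv F * G) - smult (of_rat v) (F * pderiv G))) = F^(j+1)"
      using kX unfolding X_def Bk_def .
    hence "smult (inverse (of_int \<rho>) * of_nat k) (smult (of_rat w) (pderiv F * G) - smult (of_rat v) (F * pderiv G)) = F^(j+1)"
      by (simp add: mult.commute)
    hence "smult (of_int \<rho> / of_nat k) (smult (inverse (of_int \<rho>) * of_nat k) (smult (of_rat w) (pderiv F * G) - smult (of_rat v) (F * pderiv G))) = smult (of_int \<rho> / of_nat k) (F^(j+1))"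
      by simp
    thus ?thesis using k0 rho_ne[where 'k='k] by (simp add: field_simps)
  qed
  have key: "of_rat w * of_nat m - of_rat v * of_nat n \<noteq> (0::'k)" if "0 < m" "n < j*m" for m n
  proof -
    have "rat_of_nat n < of_nat (j*m)" using that(2) by (simp only: of_nat_less_iff)
    hence "v * of_nat n < v * of_nat (j * m)" using vpos by simp
    moreover have "sr * of_nat m > 0" using sr_pos that by simp
    ultimately have "w * of_nat m - v * of_nat n > 0" unfolding wv by (simp add: algebra_simps)
    hence "(of_rat (w * of_nat m - v * of_nat n) :: 'k) \<noteq> 0" by simp
    thus ?thesis by (simp add: of_rat_diff of_rat_mult)
  qed
  have "F^j dvd G" by (rule div_lemma[OF F0 G0 Yeq key])
  then obtain Q0 where GQ: "G = F^j * Q0" by (elim dvdE)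
  have Q00: "Q0 \<noteq> 0" using G0 GQ by auto
  have vQ0: "valid sr Q0"
    by (rule valid_div[OF vFt[of j]]) (use F0 vG GQ wv in auto)
  define Ek where "Ek = smult (of_nat k) Q0"
  have Ek0: "Ek \<noteq> 0" using Q00 k0 by (simp add: Ek_def)
  have vEk: "valid sr Ek" using vQ0 by (simp add: Ek_def valid_smult)
  have "X = F^j * Bk v sr F Q0" unfolding X_def wv GQ by (rule Bk_mulpow)
  hence "F^j * smult (of_nat k) (Bk v sr F Q0) = F^j * F" using kX by (simp add: mult_smult_right algebra_simps)
  note eqj = this
  have nzj: "F^j \<noteq> 0" using F0 by simp
  have "smult (of_nat k) (Bk v sr F Q0) = F" using eqj by (rule iffD1[OF mult_left_cancel[OF nzj]])
  hence BE: "Bk v sr F Ek = F" by (simp add: Ek_def Bk_smult2)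
  define E where "E = emb sr Ek"
  have EE: "W_elem E" unfolding E_def by (rule emb_elem)
  have ge: "E e = (if deg e = sr then coeff Ek (snd e) else 0)" for e by (simp add: E_def emb_def)
  note gE = gen[OF EE vEk Ek0 ge]
  have homog: "W_homog l \<rho> \<sigma> E"
    unfolding W_homog_def using ell_eq_emb[OF EE] gE by (simp add: E_def)
  have "W_bracket l \<rho> \<sigma> (W_pow l C t) E = (\<lambda>e. of_nat t * W_ell l \<rho> \<sigma> (W_pow l C t) e)" if t: "t \<ge> 1" for t
  proof -
    have Bt: "Bk (of_nat t * v) sr (F^t) Ek = smult (of_nat t) (F^t)"
      using Bk_pow[OF t, of v sr F Ek] BE t by (simp add: power_Suc2[symmetric] del: power_Suc)
    have t0: "smult (of_nat t) (F^t) \<noteq> 0" using F0 t by simp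
    have "W_bracket l \<rho> \<sigma> (W_pow l C t) E = emb (of_nat t * v) (smult (of_nat t) (F^t))"
      using brk[OF EE gE(1), of t] gE(2,3) Bt t0 F0 by simp
    thus ?thesis using ellpow[of t] by (simp add: emb_smult fun_eq_iff)
  qed
  thus ?thesis using EE homog by blast
qed
end
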